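(* Let $m$ be a positive integer and let $\mathcal D$ be a distribution on $G_m\times\{0,1\}$, where $G_m=\{0,1/m,\ldots,1\}$. Then $\mathsf{CDL}(\mathcal D)\le2\,\mathsf{SCDL}_m(\mathcal D)+2/m$.
   Context: For $x\in\mathbb R$ write $x_+=\max\{x,0\}$. For a distribution $\mathcal D$ of $(p,y)\in[0,1]\times\{0,1\}$ and $i\in\{0,\ldots,m\}$, let $w_i(p)=(1-|mp-i|)_+$, $\pi_i=\mathbb E_{\mathcal D}[w_i(p)]$ and $q_i=\mathbb E_{\mathcal D}[w_i(p)y]/\pi_i$ (terms with $\pi_i=0$ are $0$; when $p\in G_m$ these are $\Pr[p=i/m]$ and $\mathbb E[y\mid p=i/m]$). Define $$\mathsf{SCDL}_m(\mathcal D)=\max_{i=0,\ldots,m}\Big(\sum_{j=0}^{i}\pi_j\big(q_j-\tfrac{i+1}{m}\big)_+ +\sum_{j=i+1}^{m}\pi_j\big(\tfrac im-q_j\big)_+\Big).$$ A decision task $Z=(A,U)$ has action set $A$ and utility $U:A\times\{0,1\}\to[0,1]$; its best-response function is $r_Z^*(p)\in\arg\max_{a\in A}\mathbb E_{y\sim\mathsf{Ber}(p)}U(a,y)$; the swap regret of a response $r$ is $\mathsf{SR}_Z(r,\mathcal D)=\sup_{\sigma:A\to A}\mathbb E_{(p,y)\sim\mathcal D}[U(\sigma(r(p)),y)-U(r(p),y)]$. The calibration decision loss is $\mathsf{CDL}(\mathcal D)=\sup_Z\mathsf{SR}_Z(r_Z^*,\mathcal D)$ over all such decision tasks. *)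

theory Defs
  imports "HOL-Probability.Probability"
begin

text \<open>Distributions D of (p,y) are pmfs on real \<times> real, with y \<in> {0,1}.\<close>

definition pospart :: "real \<Rightarrow> real" where
  "pospart x = max x 0"

definition grid :: "nat \<Rightarrow> real set" where
  "grid m = {real i / real m | i. i \<le> m}"

definition wgt :: "nat \<Rightarrow> nat \<Rightarrow> real \<Rightarrow> real" where
  "wgt m i p = pospart (1 - \<bar>real m * p - real i\<bar>)"

definition piw :: "nat \<Rightarrow> (real \<times> real) pmf \<Rightarrow> nat \<Rightarrow> real" where
  "piw m D i = measure_pmf.expectation D (\<lambda>(p, y). wgt m i p)"

definition qw :: "nat \<Rightarrow> (real \<times> real) pmf \<Rightarrow> nat \<Rightarrow> real" where
  "qw m D i = (if piw m D i = 0 then 0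
     else measure_pmf.expectation D (\<lambda>(p, y). wgt m i p * y) / piw m D i)"

definition SCDL :: "nat \<Rightarrow> (real \<times> real) pmf \<Rightarrow> real" where
  "SCDL m D = Max ((\<lambda>i. (\<Sum>j\<in>{0..i}. piw m D j * pospart (qw m D j - real (i + 1) / real m))
                   + (\<Sum>j\<in>{i+1..m}. piw m D j * pospart (real i / real m - qw m D j))) ` {0..m})"

definition decision_task :: "'a set \<Rightarrow> ('a \<Rightarrow> real \<Rightarrow> real) \<Rightarrow> bool" where
  "decision_task A U \<longleftrightarrow> A \<noteq> {} \<and> (\<forall>a\<in>A. \<forall>y\<in>{0,1}. 0 \<le> U a y \<and> U a y \<le> 1)"

definition exp_util :: "('a \<Rightarrow> real \<Rightarrow> real) \<Rightarrow> 'a \<Rightarrow> real \<Rightarrow> real" where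
  "exp_util U a p = (1 - p) * U a 0 + p * U a 1"

definition best_response :: "'a set \<Rightarrow> ('a \<Rightarrow> real \<Rightarrow> real) \<Rightarrow> (real \<Rightarrow> 'a) \<Rightarrow> bool" where
  "best_response A U r \<longleftrightarrow>
     (\<forall>p\<in>{0..1}. r p \<in> A \<and> (\<forall>a\<in>A. exp_util U a p \<le> exp_util U (r p) p))"

definition swap_regret ::
  "'a set \<Rightarrow> ('a \<Rightarrow> real \<Rightarrow> real) \<Rightarrow> (real \<Rightarrow> 'a) \<Rightarrow> (real \<times> real) pmf \<Rightarrow> real" where
  "swap_regret A U r D = (SUP \<sigma>\<in>{\<sigma>. \<forall>a\<in>A. \<sigma> a \<in> A}.
      measure_pmf.expectation D (\<lambda>(p, y). U (\<sigma> (r p)) y - U (r p) y))"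

end

theory Submission
  imports Defs
begin

lemma key_up:
  fixes m :: nat and al be :: "nat \<Rightarrow> real" and ab bb q :: real
  assumes m: "m > 0"
    and opt: "\<And>k k'. k \<le> m \<Longrightarrow> k' \<le> m \<Longrightarrow> al k' + be k' * (real k / real m) \<le> al k + be k * (real k / real m)"
    and optb: "\<And>k. k \<le> m \<Longrightarrow> ab + bb * (real k / real m) \<le> al k + be k * (real k / real m)"
    and q: "q \<le> 1"
    and j: "j \<le> m"
  shows "real j / real m \<le> q \<longrightarrow> ab + bb*q - (al j + be j * q) \<le> (\<Sum>i\<in>{j..<m}. (be (Suc i) - be i) * (pospart (q - real (Suc i)/real m) + 1/real m))"
  using j
proof (induction j rule: inc_induct)
  case base
  have "real m / real m = 1" using m by simp
  then show ?case using optb[of m] q by auto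
next
  case (step n)
  have sp: "real (Suc n) / real m = real n / real m + 1 / real m" by (simp add: add_divide_distrib)
  have o1: "al (Suc n) + be (Suc n) * (real n / real m) \<le> al n + be n * (real n / real m)"
    using opt[of n "Suc n"] step by auto
  have o2: "al n + be n * (real (Suc n) / real m) \<le> al (Suc n) + be (Suc n) * (real (Suc n) / real m)"
    using opt[of "Suc n" n] step by auto
  have mono: "be n \<le> be (Suc n)"
  proof -
    have "be n * (1 / real m) \<le> be (Suc n) * (1 / real m)" using o1 o2 unfolding sp distrib_left by linarith
    then show ?thesis using m by (simp add: divide_right_mono_neg divide_le_cancel)
  qed
  have nonneg: "\<forall>i\<in>{Suc n..<m}. 0 \<le> (be (Suc i) - be i) * (pospart (q - real (Suc i)/real m) + 1/real m)"
  proof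
    fix i assume i: "i \<in> {Suc n..<m}"
    have "be i \<le> be (Suc i)"
    proof -
      have sp': "real (Suc i) / real m = real i / real m + 1 / real m" by (simp add: add_divide_distrib)
      have o1: "al (Suc i) + be (Suc i) * (real i / real m) \<le> al i + be i * (real i / real m)"
        using opt[of i "Suc i"] i by auto
      have o2: "al i + be i * (real (Suc i) / real m) \<le> al (Suc i) + be (Suc i) * (real (Suc i) / real m)"
        using opt[of "Suc i" i] i by auto
      have "be i * (1 / real m) \<le> be (Suc i) * (1 / real m)" using o1 o2 unfolding sp' distrib_left by linarith
      then show ?thesis using m by (simp add: divide_right_mono_neg divide_le_cancel)
    qed
    moreover have "pospart (q - real (Suc i)/real m) + 1/real m \<ge> 0" by (simp add: pospart_def)
    ultimately show "0 \<le> (be (Suc i) - be i) * (pospart (q - real (Suc i)/real m) + 1/real m)" by simp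
  qed
  have split: "(\<Sum>i\<in>{n..<m}. (be (Suc i) - be i) * (pospart (q - real (Suc i)/real m) + 1/real m))
     = (be (Suc n) - be n) * (pospart (q - real (Suc n)/real m) + 1/real m)
       + (\<Sum>i\<in>{Suc n..<m}. (be (Suc i) - be i) * (pospart (q - real (Suc i)/real m) + 1/real m))"
    using step by (simp add: sum.atLeast_Suc_lessThan)
  have rest: "(\<Sum>i\<in>{Suc n..<m}. (be (Suc i) - be i) * (pospart (q - real (Suc i)/real m) + 1/real m)) \<ge> 0"
    using nonneg by (intro sum_nonneg) blast
  show ?case
  proof
    assume qn: "real n / real m \<le> q"
    show "ab + bb*q - (al n + be n * q) \<le> (\<Sum>i\<in>{n..<m}. (be (Suc i) - be i) * (pospart (q - real (Suc i)/real m) + 1/real m))"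
    proof (cases "q \<le> real (Suc n) / real m")
      case True
      have b0: "ab + bb*(real n / real m) - (al n + be n * (real n / real m)) \<le> 0"
        using optb[of n] step by auto
      have b1: "ab + bb*(real (Suc n) / real m) - (al n + be n * (real (Suc n) / real m)) \<le> (be (Suc n) - be n) * (1/real m)"
        using optb[of "Suc n"] step o1 unfolding sp distrib_left left_diff_distrib by linarith
      have "ab + bb*q - (al n + be n * q) \<le> (be (Suc n) - be n) * (1/real m)"
      proof (cases "bb - be n \<ge> 0")
        case True
        have "(bb - be n) * q \<le> (bb - be n) * (real (Suc n) / real m)"
          using True \<open>q \<le> real (Suc n) / real m\<close> by (rule mult_left_mono[rotated])
        then show ?thesis using b1 unfolding left_diff_distrib by linarith
      next
        case False
        have "(bb - be n) * q \<le> (bb - be n) * (real n / real m)"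
          using False qn by (intro mult_left_mono_neg) auto
        moreover have "(be (Suc n) - be n) * (1/real m) \<ge> 0" using mono m by simp
        ultimately show ?thesis using b0 unfolding left_diff_distrib by linarith
      qed
      moreover have "(be (Suc n) - be n) * (1/real m) \<le> (be (Suc n) - be n) * (pospart (q - real (Suc n)/real m) + 1/real m)"
        using mono by (intro mult_left_mono) (auto simp: pospart_def)
      ultimately show ?thesis using split rest by linarith
    next
      case False
      have IH: "ab + bb*q - (al (Suc n) + be (Suc n) * q) \<le> (\<Sum>i\<in>{Suc n..<m}. (be (Suc i) - be i) * (pospart (q - real (Suc i)/real m) + 1/real m))"
        using step.IH False by auto
      have "al (Suc n) + be (Suc n) * q - (al n + be n * q) \<le> (be (Suc n) - be n) * (q - real n / real m)"
        using o1 by (simp add: algebra_simps)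
      also have "\<dots> = (be (Suc n) - be n) * (pospart (q - real (Suc n)/real m) + 1/real m)"
        using False sp by (simp add: pospart_def)
      finally show ?thesis using IH split by linarith
    qed
  qed
qed

lemma key_down:
  fixes m :: nat and al be :: "nat \<Rightarrow> real" and ab bb q :: real
  assumes m: "m > 0"
    and opt: "\<And>k k'. k \<le> m \<Longrightarrow> k' \<le> m \<Longrightarrow> al k' + be k' * (real k / real m) \<le> al k + be k * (real k / real m)"
    and optb: "\<And>k. k \<le> m \<Longrightarrow> ab + bb * (real k / real m) \<le> al k + be k * (real k / real m)"
    and q: "0 \<le> q"
  shows "j \<le> m \<Longrightarrow> q \<le> real j / real m \<longrightarrow> ab + bb*q - (al j + be j * q) \<le> (\<Sum>i<j. (be (Suc i) - be i) * (pospart (real i/real m - q) + 1/real m))"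
proof (induction j)
  case 0
  then show ?case using optb[of 0] q by auto
next
  case (Suc n)
  have sp: "real (Suc n) / real m = real n / real m + 1 / real m" by (simp add: add_divide_distrib)
  have o1: "al (Suc n) + be (Suc n) * (real n / real m) \<le> al n + be n * (real n / real m)"
    using opt[of n "Suc n"] Suc by auto
  have o2: "al n + be n * (real (Suc n) / real m) \<le> al (Suc n) + be (Suc n) * (real (Suc n) / real m)"
    using opt[of "Suc n" n] Suc by auto
  have mono: "be n \<le> be (Suc n)"
  proof -
    have "be n * (1 / real m) \<le> be (Suc n) * (1 / real m)" using o1 o2 unfolding sp distrib_left by linarith
    then show ?thesis using m by (simp add: divide_right_mono_neg divide_le_cancel)
  qed
  have nonneg: "\<forall>i\<in>{..<n}. 0 \<le> (be (Suc i) - be i) * (pospart (real i/real m - q) + 1/real m)"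
  proof
    fix i assume i: "i \<in> {..<n}"
    have "be i \<le> be (Suc i)"
    proof -
      have sp': "real (Suc i) / real m = real i / real m + 1 / real m" by (simp add: add_divide_distrib)
      have o1: "al (Suc i) + be (Suc i) * (real i / real m) \<le> al i + be i * (real i / real m)"
        using opt[of i "Suc i"] i Suc by auto
      have o2: "al i + be i * (real (Suc i) / real m) \<le> al (Suc i) + be (Suc i) * (real (Suc i) / real m)"
        using opt[of "Suc i" i] i Suc by auto
      have "be i * (1 / real m) \<le> be (Suc i) * (1 / real m)" using o1 o2 unfolding sp' distrib_left by linarith
      then show ?thesis using m by (simp add: divide_right_mono_neg divide_le_cancel)
    qed
    moreover have "pospart (real i/real m - q) + 1/real m \<ge> 0" by (simp add: pospart_def)
    ultimately show "0 \<le> (be (Suc i) - be i) * (pospart (real i/real m - q) + 1/real m)" by simp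
  qed
  have split: "(\<Sum>i<Suc n. (be (Suc i) - be i) * (pospart (real i/real m - q) + 1/real m))
     = (\<Sum>i<n. (be (Suc i) - be i) * (pospart (real i/real m - q) + 1/real m))
       + (be (Suc n) - be n) * (pospart (real n/real m - q) + 1/real m)"
    by simp
  have rest: "(\<Sum>i<n. (be (Suc i) - be i) * (pospart (real i/real m - q) + 1/real m)) \<ge> 0"
    using nonneg by (intro sum_nonneg) blast
  show ?case
  proof
    assume qn: "q \<le> real (Suc n) / real m"
    show "ab + bb*q - (al (Suc n) + be (Suc n) * q) \<le> (\<Sum>i<Suc n. (be (Suc i) - be i) * (pospart (real i/real m - q) + 1/real m))"
    proof (cases "real n / real m \<le> q")
      case True
      have b0: "ab + bb*(real (Suc n) / real m) - (al (Suc n) + be (Suc n) * (real (Suc n) / real m)) \<le> 0"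
        using optb[of "Suc n"] Suc by auto
      have b1: "ab + bb*(real n / real m) - (al (Suc n) + be (Suc n) * (real n / real m)) \<le> (be (Suc n) - be n) * (1/real m)"
        using optb[of n] Suc o2 unfolding sp distrib_left left_diff_distrib by linarith
      have "ab + bb*q - (al (Suc n) + be (Suc n) * q) \<le> (be (Suc n) - be n) * (1/real m)"
      proof (cases "bb - be (Suc n) \<ge> 0")
        case True
        have "(bb - be (Suc n)) * q \<le> (bb - be (Suc n)) * (real (Suc n) / real m)"
          using True qn by (rule mult_left_mono[rotated])
        moreover have "(be (Suc n) - be n) * (1/real m) \<ge> 0" using mono m by simp
        ultimately show ?thesis using b0 unfolding left_diff_distrib by linarith
      next
        case False
        have "(bb - be (Suc n)) * q \<le> (bb - be (Suc n)) * (real n / real m)"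
          using False \<open>real n / real m \<le> q\<close> by (intro mult_left_mono_neg) auto
        then show ?thesis using b1 unfolding left_diff_distrib by linarith
      qed
      moreover have "(be (Suc n) - be n) * (1/real m) \<le> (be (Suc n) - be n) * (pospart (real n/real m - q) + 1/real m)"
        using mono by (intro mult_left_mono) (auto simp: pospart_def)
      ultimately show ?thesis using split rest by linarith
    next
      case False
      have IH: "ab + bb*q - (al n + be n * q) \<le> (\<Sum>i<n. (be (Suc i) - be i) * (pospart (real i/real m - q) + 1/real m))"
        using Suc.IH Suc.prems False by auto
      have "al n + be n * q - (al (Suc n) + be (Suc n) * q) \<le> (be (Suc n) - be n) * (real (Suc n) / real m - q)"
        using o2 unfolding right_diff_distrib left_diff_distrib by linarith
      also have "\<dots> = (be (Suc n) - be n) * (pospart (real n/real m - q) + 1/real m)"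
        using False sp by (simp add: pospart_def)
      finally show ?thesis using IH split by linarith
    qed
  qed
qed

lemma be_mono:
  fixes m :: nat and al be :: "nat \<Rightarrow> real"
  assumes m: "m > 0"
    and opt: "\<And>k k'. k \<le> m \<Longrightarrow> k' \<le> m \<Longrightarrow> al k' + be k' * (real k / real m) \<le> al k + be k * (real k / real m)"
    and i: "i < m"
  shows "be i \<le> be (Suc i)"
proof -
  have sp': "real (Suc i) / real m = real i / real m + 1 / real m" by (simp add: add_divide_distrib)
  have o1: "al (Suc i) + be (Suc i) * (real i / real m) \<le> al i + be i * (real i / real m)"
    using opt[of i "Suc i"] i by auto
  have o2: "al i + be i * (real (Suc i) / real m) \<le> al (Suc i) + be (Suc i) * (real (Suc i) / real m)"
    using opt[of "Suc i" i] i by auto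
  have "be i * (1 / real m) \<le> be (Suc i) * (1 / real m)" using o1 o2 unfolding sp' distrib_left by linarith
  then show ?thesis using m by (simp add: divide_right_mono_neg divide_le_cancel)
qed

lemma key:
  fixes m :: nat and al be :: "nat \<Rightarrow> real" and ab bb q :: real
  assumes m: "m > 0"
    and opt: "\<And>k k'. k \<le> m \<Longrightarrow> k' \<le> m \<Longrightarrow> al k' + be k' * (real k / real m) \<le> al k + be k * (real k / real m)"
    and optb: "\<And>k. k \<le> m \<Longrightarrow> ab + bb * (real k / real m) \<le> al k + be k * (real k / real m)"
    and q0: "0 \<le> q" and q1: "q \<le> 1" and j: "j \<le> m"
  shows "ab + bb*q - (al j + be j * q) \<le> (\<Sum>i<m. (be (Suc i) - be i) * ((if j \<le> i then pospart (q - real (Suc i)/real m) else pospart (real i/real m - q)) + 1/real m))"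
proof -
  let ?F = "\<lambda>i. (be (Suc i) - be i) * ((if j \<le> i then pospart (q - real (Suc i)/real m) else pospart (real i/real m - q)) + 1/real m)"
  have nn: "\<And>i. i < m \<Longrightarrow> ?F i \<ge> 0"
    using be_mono[OF m opt] by (intro mult_nonneg_nonneg) (auto simp: pospart_def)
  have "(\<Sum>i<m. ?F i) = (\<Sum>i\<in>{0..<j}. ?F i) + (\<Sum>i\<in>{j..<m}. ?F i)"
    using j by (simp only: lessThan_atLeast0 sum.atLeastLessThan_concat[of 0 j m] le0)
  moreover have A: "(\<Sum>i\<in>{0..<j}. ?F i) = (\<Sum>i<j. (be (Suc i) - be i) * (pospart (real i/real m - q) + 1/real m))"
    by (simp add: lessThan_atLeast0)
  moreover have B: "(\<Sum>i\<in>{j..<m}. ?F i) = (\<Sum>i\<in>{j..<m}. (be (Suc i) - be i) * (pospart (q - real (Suc i)/real m) + 1/real m))"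
    by (rule sum.cong) auto
  moreover have "(\<Sum>i\<in>{0..<j}. ?F i) \<ge> 0"
  proof (intro sum_nonneg)
    fix i assume "i \<in> {0..<j}" with j have "i < m" by auto
    from nn[OF this] show "0 \<le> ?F i" .
  qed
  moreover have "(\<Sum>i\<in>{j..<m}. ?F i) \<ge> 0"
  proof (intro sum_nonneg)
    fix i assume "i \<in> {j..<m}" then have "i < m" by auto
    from nn[OF this] show "0 \<le> ?F i" .
  qed
  moreover have "real j / real m \<le> q \<or> q \<le> real j / real m" by linarith
  ultimately show ?thesis
    using key_up[OF m opt optb q1 j] key_down[OF m opt optb q0 j] by force
qed

lemma E_formula:
  fixes h :: "real \<times> real \<Rightarrow> real" and D :: "(real \<times> real) pmf"
  assumes m: "m > 0" and supp: "set_pmf D \<subseteq> grid m \<times> {0, 1}"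
  shows "measure_pmf.expectation D h = (\<Sum>k\<le>m. pmf D (real k/real m, 0) * h (real k/real m, 0) + pmf D (real k/real m, 1) * h (real k/real m, 1))"
proof -
  let ?g = "\<lambda>(k::nat, y::real). (real k / real m, y)"
  let ?I = "{..m} \<times> {0::real,1}"
  have fin: "finite (?g ` ?I)" by auto
  have sub: "set_pmf D \<subseteq> ?g ` ?I"
  proof
    fix x assume "x \<in> set_pmf D"
    then have "x \<in> grid m \<times> {0,1}" using supp by blast
    then obtain i y where "x = (real i / real m, y)" "i \<le> m" "y \<in> {0,1}"
      unfolding grid_def by blast
    then show "x \<in> ?g ` ?I" by (auto intro!: image_eqI[where x="(i,y)"])
  qed
  have inj: "inj_on ?g ?I" using m by (auto simp: inj_on_def)
  have "measure_pmf.expectation D h = (\<Sum>x\<in>?g ` ?I. h x * pmf D x)"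
    by (rule integral_measure_pmf_real[OF fin]) (use sub in auto)
  also have "\<dots> = (\<Sum>z\<in>?I. h (?g z) * pmf D (?g z))"
    by (subst sum.reindex[OF inj]) simp
  also have "\<dots> = (\<Sum>k\<le>m. \<Sum>y\<in>{0::real,1}. h (?g (k,y)) * pmf D (?g (k,y)))"
    by (subst sum.cartesian_product) (simp add: split_def)
  also have "\<dots> = (\<Sum>k\<le>m. pmf D (real k/real m, 0) * h (real k/real m, 0) + pmf D (real k/real m, 1) * h (real k/real m, 1))"
    by (simp add: mult.commute)
  finally show ?thesis .
qed

lemma wgt_grid:
  assumes m: "m > 0"
  shows "wgt m j (real k / real m) = (if k = j then 1 else 0)"
proof -
  have e: "real m * (real k / real m) = real k" using m by simp
  show ?thesis
  proof (cases "k = j")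
    case True then show ?thesis using m by (simp add: wgt_def pospart_def e)
  next
    case False
    then have "\<bar>real k - real j\<bar> \<ge> 1" by linarith
    then show ?thesis using False m by (simp add: wgt_def pospart_def e)
  qed
qed

theorem lemma4p7:
  fixes m :: nat and D :: "(real \<times> real) pmf"
    and A :: "'a set" and U :: "'a \<Rightarrow> real \<Rightarrow> real" and r :: "real \<Rightarrow> 'a"
  assumes "m > 0"
    and "set_pmf D \<subseteq> grid m \<times> {0, 1}"
    and "decision_task A U"
    and "best_response A U r"
  shows "swap_regret A U r D \<le> 2 * SCDL m D + 2 / real m"
proof -
  note m = assms(1) and supp = assms(2)
  define P where "P k y = pmf D (real k / real m, y)" for k y
  define a where "a k = r (real k / real m)" for k
  define al where "al k = U (a k) 0" for k
  define be where "be k = U (a k) 1 - U (a k) 0" for k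
  have ptin: "real k / real m \<in> {0..1}" if "k \<le> m" for k
    using m that by auto
  have aA: "a k \<in> A" if "k \<le> m" for k
    using assms(4) ptin[OF that] unfolding best_response_def a_def by blast
  have BR: "U a' 0 + (U a' 1 - U a' 0) * (real k / real m) \<le> al k + be k * (real k / real m)"
    if "k \<le> m" "a' \<in> A" for k a'
  proof -
    have "exp_util U a' (real k / real m) \<le> exp_util U (a k) (real k / real m)"
      using assms(4) ptin[OF that(1)] that(2) unfolding best_response_def a_def by blast
    then show ?thesis unfolding exp_util_def al_def be_def by (simp add: algebra_simps)
  qed
  have opt: "al k' + be k' * (real k / real m) \<le> al k + be k * (real k / real m)"
    if "k \<le> m" "k' \<le> m" for k k'
    using BR[OF that(1) aA[OF that(2)]] unfolding al_def be_def .
  have Ub: "0 \<le> U a' y \<and> U a' y \<le> 1" if "a' \<in> A" "y \<in> {0,1}" for a' y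
    using assms(3) that unfolding decision_task_def by blast
  have Pnn: "P k y \<ge> 0" for k y unfolding P_def by simp
  have piw: "piw m D j = P j 0 + P j 1" if "j \<le> m" for j
  proof -
    have "piw m D j = (\<Sum>k\<le>m. P k 0 * wgt m j (real k / real m) + P k 1 * wgt m j (real k / real m))"
      unfolding piw_def by (subst E_formula[OF m supp]) (simp add: P_def)
    also have "\<dots> = (\<Sum>k\<le>m. if k = j then P j 0 + P j 1 else 0)"
      by (rule sum.cong) (auto simp: wgt_grid[OF m])
    also have "\<dots> = P j 0 + P j 1" using that by simp
    finally show ?thesis .
  qed
  have Ey: "measure_pmf.expectation D (\<lambda>(p, y). wgt m j p * y) = P j 1" if "j \<le> m" for j
  proof -
    have "measure_pmf.expectation D (\<lambda>(p, y). wgt m j p * y) = (\<Sum>k\<le>m. P k 1 * wgt m j (real k / real m))"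
      by (subst E_formula[OF m supp]) (simp add: P_def)
    also have "\<dots> = (\<Sum>k\<le>m. if k = j then P j 1 else 0)"
      by (rule sum.cong) (auto simp: wgt_grid[OF m])
    also have "\<dots> = P j 1" using that by simp
    finally show ?thesis .
  qed
  have pq: "piw m D j * qw m D j = P j 1" if "j \<le> m" for j
  proof (cases "piw m D j = 0")
    case True
    then have "P j 1 = 0" using piw[OF that] Pnn[of j 0] Pnn[of j 1] by linarith
    then show ?thesis using True by (simp add: qw_def)
  next
    case False
    then show ?thesis by (simp add: qw_def Ey[OF that])
  qed
  have piwnn: "piw m D j \<ge> 0" if "j \<le> m" for j
    using piw[OF that] Pnn[of j 0] Pnn[of j 1] by linarith
  have q01: "0 \<le> qw m D j \<and> qw m D j \<le> 1" if "j \<le> m" for j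
  proof (cases "piw m D j = 0")
    case True
    then show ?thesis by (simp add: qw_def)
  next
    case False
    then have pos: "piw m D j > 0" using piwnn[OF that] by linarith
    have "qw m D j = P j 1 / piw m D j" using False by (simp add: qw_def Ey[OF that])
    moreover have "P j 1 \<le> piw m D j" using piw[OF that] Pnn[of j 0] by linarith
    ultimately show ?thesis using pos Pnn[of j 1] by (simp add: divide_le_eq_1)
  qed
  have tot: "(\<Sum>k\<le>m. piw m D k) = 1"
  proof -
    have "(1::real) = measure_pmf.expectation D (\<lambda>_. 1)" by simp
    also have "\<dots> = (\<Sum>k\<le>m. P k 0 + P k 1)"
      by (subst E_formula[OF m supp]) (simp add: P_def)
    also have "\<dots> = (\<Sum>k\<le>m. piw m D k)" by (rule sum.cong) (auto simp: piw)
    finally show ?thesis by simp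
  qed
  define T where "T i = (\<Sum>j\<in>{0..i}. piw m D j * pospart (qw m D j - real (i + 1) / real m))
                   + (\<Sum>j\<in>{i+1..m}. piw m D j * pospart (real i / real m - qw m D j))" for i
  have TS: "T i \<le> SCDL m D" if "i \<le> m" for i
    unfolding SCDL_def T_def using that by (intro Max_ge) auto
  have T0: "T 0 \<ge> 0"
    unfolding T_def using piwnn
    by (intro add_nonneg_nonneg sum_nonneg mult_nonneg_nonneg) (auto simp: pospart_def)
  define K where "K = SCDL m D + 1 / real m"
  have K0: "K \<ge> 0" using TS[of 0] T0 m unfolding K_def by simp
  have bed: "be m - be 0 \<le> 2"
    using Ub[OF aA[of m], of 0] Ub[OF aA[of m], of 1] Ub[OF aA[of 0], of 0] Ub[OF aA[of 0], of 1]
    unfolding be_def by auto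
  show ?thesis unfolding swap_regret_def
  proof (rule cSUP_least)
    show "{\<sigma>. \<forall>a\<in>A. \<sigma> a \<in> A} \<noteq> {}" 
    proof -
      have "id \<in> {\<sigma>. \<forall>a\<in>A. \<sigma> a \<in> A}" by simp
      then show ?thesis by blast
    qed
  next
    fix \<sigma> assume \<sigma>: "\<sigma> \<in> {\<sigma>. \<forall>a\<in>A. \<sigma> a \<in> A}"
    define ab where "ab k = U (\<sigma> (a k)) 0" for k
    define bb where "bb k = U (\<sigma> (a k)) 1 - U (\<sigma> (a k)) 0" for k
    have optb: "ab j + bb j * (real k / real m) \<le> al k + be k * (real k / real m)"
      if "j \<le> m" "k \<le> m" for j k
      using BR[OF that(2), of "\<sigma> (a j)"] \<sigma> aA[OF that(1)] unfolding ab_def bb_def by blast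
    define c where "c i = be (Suc i) - be i" for i
    define psi where "psi i j = (if j \<le> i then pospart (qw m D j - real (Suc i)/real m) else pospart (real i/real m - qw m D j))" for i j
    have cnn: "c i \<ge> 0" if "i < m" for i
      unfolding c_def using be_mono[OF m opt that] by simp
    have "measure_pmf.expectation D (\<lambda>(p, y). U (\<sigma> (r p)) y - U (r p) y)
        = (\<Sum>k\<le>m. P k 0 * (U (\<sigma> (a k)) 0 - U (a k) 0) + P k 1 * (U (\<sigma> (a k)) 1 - U (a k) 1))"
      by (subst E_formula[OF m supp]) (simp add: P_def a_def)
    also have "\<dots> = (\<Sum>k\<le>m. piw m D k * (ab k + bb k * qw m D k - (al k + be k * qw m D k)))"
    proof (rule sum.cong)
      fix k assume k: "k \<in> {..m}"
      have "piw m D k * (ab k + bb k * qw m D k - (al k + be k * qw m D k))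
          = piw m D k * (ab k - al k) + (piw m D k * qw m D k) * (bb k - be k)"
        by (simp add: algebra_simps)
      also have "\<dots> = (P k 0 + P k 1) * (ab k - al k) + P k 1 * (bb k - be k)"
        using k pq[of k] piw[of k] by simp
      finally show "P k 0 * (U (\<sigma> (a k)) 0 - U (a k) 0) + P k 1 * (U (\<sigma> (a k)) 1 - U (a k) 1)
          = piw m D k * (ab k + bb k * qw m D k - (al k + be k * qw m D k))"
        unfolding ab_def bb_def al_def be_def by (simp add: algebra_simps)
    qed simp
    also have "\<dots> \<le> (\<Sum>k\<le>m. piw m D k * (\<Sum>i<m. c i * (psi i k + 1/real m)))"
    proof (rule sum_mono)
      fix k assume k: "k \<in> {..m}"
      show "piw m D k * (ab k + bb k * qw m D k - (al k + be k * qw m D k)) \<le> piw m D k * (\<Sum>i<m. c i * (psi i k + 1/real m))"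
        unfolding c_def psi_def
        using k q01[of k] piwnn[of k]
        by (intro mult_left_mono key[OF m opt]) (use optb in auto)
    qed
    also have "\<dots> = (\<Sum>i<m. c i * ((\<Sum>k\<le>m. piw m D k * psi i k) + (\<Sum>k\<le>m. piw m D k) / real m))"
    proof -
      have "(\<Sum>k\<le>m. piw m D k * (\<Sum>i<m. c i * (psi i k + 1/real m)))
          = (\<Sum>k\<le>m. \<Sum>i<m. c i * (piw m D k * psi i k + piw m D k / real m))"
        by (simp add: sum_distrib_left algebra_simps)
      also have "\<dots> = (\<Sum>i<m. \<Sum>k\<le>m. c i * (piw m D k * psi i k + piw m D k / real m))"
        by (rule sum.swap)
      also have "\<dots> = (\<Sum>i<m. c i * ((\<Sum>k\<le>m. piw m D k * psi i k) + (\<Sum>k\<le>m. piw m D k) / real m))"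
        by (rule sum.cong) (simp_all add: sum.distrib[symmetric] sum_divide_distrib sum_distrib_left)
      finally show ?thesis .
    qed
    also have "\<dots> = (\<Sum>i<m. c i * (T i + 1 / real m))"
    proof (rule sum.cong)
      fix i assume i: "i \<in> {..<m}"
      have "(\<Sum>k\<le>m. piw m D k * psi i k)
          = (\<Sum>k\<le>m. if k \<le> i then piw m D k * pospart (qw m D k - real (Suc i)/real m)
                       else piw m D k * pospart (real i/real m - qw m D k))"
        unfolding psi_def by (rule sum.cong) auto
      also have "\<dots> = (\<Sum>k\<in>{..m} \<inter> {k. k \<le> i}. piw m D k * pospart (qw m D k - real (Suc i)/real m))
             + (\<Sum>k\<in>{..m} \<inter> - {k. k \<le> i}. piw m D k * pospart (real i/real m - qw m D k))"
        by (rule sum.If_cases) simp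
      also have "{..m} \<inter> {k. k \<le> i} = {0..i}" using i by auto
      also have "{..m} \<inter> - {k. k \<le> i} = {i+1..m}" by auto
      finally have "(\<Sum>k\<le>m. piw m D k * psi i k) = T i" unfolding T_def by simp
      then show "c i * ((\<Sum>k\<le>m. piw m D k * psi i k) + (\<Sum>k\<le>m. piw m D k) / real m) = c i * (T i + 1 / real m)"
        using tot by simp
    qed simp
    also have "\<dots> \<le> (\<Sum>i<m. c i * K)"
      using TS cnn unfolding K_def by (intro sum_mono mult_left_mono) auto
    also have "\<dots> = (be m - be 0) * K"
      unfolding c_def by (simp add: sum_distrib_right[symmetric] sum_lessThan_telescope)
    also have "\<dots> \<le> 2 * K" using bed K0 by (intro mult_right_mono) auto
    finally show "measure_pmf.expectation D (\<lambda>(p, y). U (\<sigma> (r p)) y - U (r p) y) \<le> 2 * SCDL m D + 2 / real m"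
      unfolding K_def by simp
  qed
qed

end
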